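(* Let $X$ be a real Banach space. The following statements are equivalent. (1) $X$ is LUR. (2) $r(Q_{S_X}(x,\frac1n),Q_{S_X}(x',\frac1n))\to\left\|\frac{x}{\|x\|}-\frac{x'}{\|x'\|}\right\|$ as $n\to\infty$ for every $x,x'\in X\setminus\{0\}$. (3) $\mathrm{diam}(Q_{S_X}(x,\frac1n))\to0$ for every $x\in X\setminus\{0\}$. (4) For every $x\in X\setminus\{0\}$, every maximizing sequence in $S_X$ for $x$ converges to $-\frac{x}{\|x\|}$. (5) For every $x\in X\setminus\{0\}$, $Q_{S_X}(x)=\{-\frac{x}{\|x\|}\}$ and $Q_{S_X}(x,\frac1n)\xrightarrow{V}Q_{S_X}(x)$. (6) For every $x\in X\setminus\{0\}$, $Q_{S_X}(x)=\{-\frac{x}{\|x\|}\}$ and $Q_{S_X}(x,\frac1n)\xrightarrow{H}Q_{S_X}(x)$. (7) $S_X$ is SUR on $X\setminus\{0\}$.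
   Context: $B_X,S_X$ are the closed unit ball and unit sphere of $X$. For non-empty bounded $F$, $x\in X$, $\delta\ge0$: $r(F,x)=\sup_{y\in F}\|x-y\|$, $Q_F(x,\delta)=\{y\in F:\|x-y\|\ge r(F,x)-\delta\}$, $Q_F(x)=Q_F(x,0)$. A maximizing sequence in $F$ for $x$ is a sequence $(y_n)$ in $F$ with $\|x-y_n\|\to r(F,x)$. $F$ is SUR (strongly uniquely remotal) on $A$ if for every $x\in A$, $Q_F(x)$ is a singleton and for every $\epsilon>0$ there is $\delta>0$ with $Q_F(x,\delta)\subseteq Q_F(x)+\epsilon B_X$. For non-empty bounded $A,B$, $r(A,B)=\sup\{\|a-b\|:a\in A,b\in B\}$. $X$ is LUR if $x_n\to x$ whenever $x\in S_X$, $(x_n)\subseteq S_X$ and $\|\frac{x_n+x}{2}\|\to1$. For closed bounded sets $C_n,C_0$: $C_n\xrightarrow{V}C_0$ means both (a) for every open $U\supseteq C_0$, eventually $C_n\subseteq U$, and (b) for every open $U$ with $C_0\cap U\ne\emptyset$, eventually $C_n\cap U\neq\emptyset$; $C_n\xrightarrow{H}C_0$ means for every $\epsilon>0$, eventually $C_n\subseteq C_0+\epsilon B_X$ and $C_0\subseteq C_n+\epsilon B_X$. *)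

theory Defs
  imports "HOL-Analysis.Analysis"
begin

definition unit_sphere :: "'a::real_normed_vector set" where
  "unit_sphere = sphere 0 1"

definition farthest_rad :: "'a::real_normed_vector set \<Rightarrow> 'a \<Rightarrow> real" where
  "farthest_rad F x = (SUP y\<in>F. norm (x - y))"

definition Qd :: "'a::real_normed_vector set \<Rightarrow> 'a \<Rightarrow> real \<Rightarrow> 'a set" where
  "Qd F x \<delta> = {y \<in> F. norm (x - y) \<ge> farthest_rad F x - \<delta>}"

definition Q0 :: "'a::real_normed_vector set \<Rightarrow> 'a \<Rightarrow> 'a set" where
  "Q0 F x = Qd F x 0"

definition maximizing_seq :: "'a::real_normed_vector set \<Rightarrow> 'a \<Rightarrow> (nat \<Rightarrow> 'a) \<Rightarrow> bool" where
  "maximizing_seq F x y \<longleftrightarrow> (\<forall>n. y n \<in> F) \<and> ((\<lambda>n. norm (x - y n)) \<longlonglongrightarrow> farthest_rad F x)"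

definition enlarge :: "'a::real_normed_vector set \<Rightarrow> real \<Rightarrow> 'a set" where
  "enlarge A \<epsilon> = {a + b | a b. a \<in> A \<and> norm b \<le> \<epsilon>}"

definition SUR :: "'a::real_normed_vector set \<Rightarrow> 'a set \<Rightarrow> bool" where
  "SUR F A \<longleftrightarrow> (\<forall>x\<in>A. (\<exists>z. Q0 F x = {z}) \<and>
      (\<forall>\<epsilon>>0. \<exists>\<delta>>0. Qd F x \<delta> \<subseteq> enlarge (Q0 F x) \<epsilon>))"

definition set_rad :: "'a::real_normed_vector set \<Rightarrow> 'a set \<Rightarrow> real" where
  "set_rad A B = (SUP p\<in>A \<times> B. norm (fst p - snd p))"

definition LUR :: "'a::real_normed_vector itself \<Rightarrow> bool" where
  "LUR (_::'a itself) \<longleftrightarrow> (\<forall>(x::'a) xs. norm x = 1 \<and> (\<forall>n. norm (xs n) = 1) \<and>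
      ((\<lambda>n. norm ((1/2) *\<^sub>R (xs n + x))) \<longlonglongrightarrow> 1) \<longrightarrow> xs \<longlonglongrightarrow> x)"

definition vietoris_conv :: "(nat \<Rightarrow> 'a::topological_space set) \<Rightarrow> 'a set \<Rightarrow> bool" where
  "vietoris_conv C C0 \<longleftrightarrow>
     (\<forall>U. open U \<and> C0 \<subseteq> U \<longrightarrow> (\<forall>\<^sub>F n in sequentially. C n \<subseteq> U)) \<and>
     (\<forall>U. open U \<and> C0 \<inter> U \<noteq> {} \<longrightarrow> (\<forall>\<^sub>F n in sequentially. C n \<inter> U \<noteq> {}))"

definition hausdorff_conv :: "(nat \<Rightarrow> 'a::real_normed_vector set) \<Rightarrow> 'a set \<Rightarrow> bool" where
  "hausdorff_conv C C0 \<longleftrightarrow>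
     (\<forall>\<epsilon>>0. \<forall>\<^sub>F n in sequentially. C n \<subseteq> enlarge C0 \<epsilon> \<and> C0 \<subseteq> enlarge (C n) \<epsilon>)"

end

theory Submission
  imports Defs
begin

lemma far_rad:
  fixes x :: "'a::real_normed_vector"
  assumes "x \<noteq> 0"
  shows "farthest_rad (sphere 0 1) x = norm x + 1"
proof -
  let ?u = "(1 / norm x) *\<^sub>R x"
  have u1: "-?u \<in> sphere 0 1" using assms by simp
  have e1: "x - (- ?u) = (1 + 1 / norm x) *\<^sub>R x" by (simp add: algebra_simps)
  have "norm ((1 + 1 / norm x) *\<^sub>R x) = (1 + 1 / norm x) * norm x"
    by (simp add: add_pos_nonneg)
  also have "\<dots> = norm x + 1" using assms by (simp add: distrib_right)
  finally have eq: "norm (x - (- ?u)) = norm x + 1" unfolding e1 .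
  have le: "\<And>y. y \<in> sphere 0 (1::real) \<Longrightarrow> norm (x - y) \<le> norm x + 1"
  proof -
    fix y :: 'a assume "y \<in> sphere 0 1"
    hence "norm y = 1" by simp
    thus "norm (x - y) \<le> norm x + 1" using norm_triangle_ineq4[of x y] by linarith
  qed
  have bdd: "bdd_above ((\<lambda>y. norm (x - y)) ` sphere 0 1)"
    using le by (intro bdd_aboveI2[where M="norm x + 1"])
  show ?thesis unfolding farthest_rad_def
  proof (rule antisym)
    show "(SUP y\<in>sphere 0 1. norm (x - y)) \<le> norm x + 1"
    proof (rule cSUP_least)
      show "sphere (0::'a) 1 \<noteq> {}" using u1 by blast
    qed (rule le)
    show "norm x + 1 \<le> (SUP y\<in>sphere 0 1. norm (x - y))"
      by (rule cSUP_upper2[OF bdd u1]) (simp only: eq order_refl)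
  qed
qed

lemma Qd_iff:
  fixes x :: "'a::real_normed_vector"
  assumes "x \<noteq> 0"
  shows "y \<in> Qd (sphere 0 1) x \<delta> \<longleftrightarrow> norm y = 1 \<and> norm (x - y) \<ge> norm x + 1 - \<delta>"
  using far_rad[OF assms] by (simp add: Qd_def)

lemma negu_in:
  fixes x :: "'a::real_normed_vector"
  assumes "x \<noteq> 0" "\<delta> \<ge> 0"
  shows "- ((1 / norm x) *\<^sub>R x) \<in> Qd (sphere 0 1) x \<delta>"
proof -
  have "x - (- ((1 / norm x) *\<^sub>R x)) = (1 + 1 / norm x) *\<^sub>R x" by (simp add: algebra_simps)
  hence eq: "norm (x - (- ((1 / norm x) *\<^sub>R x))) = norm x + 1" using assms
    by (simp add: distrib_right)
  show ?thesis using assms eq by (simp add: Qd_iff)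
qed

lemma Qd_mono: "\<delta> \<le> \<delta>' \<Longrightarrow> Qd F x \<delta> \<subseteq> Qd F x \<delta>'"
  unfolding Qd_def by auto

lemma Qd_sub: "Qd F x \<delta> \<subseteq> F"
  unfolding Qd_def by auto

lemma upper_b:
  fixes x :: "'a::real_normed_vector"
  assumes "norm y = 1" shows "norm (x - y) \<le> norm x + 1"
  using assms norm_triangle_ineq4[of x y] by simp

lemma key:
  fixes x :: "'a::real_normed_vector"
  assumes "x \<noteq> 0" "norm y = 1" "\<delta> \<ge> 0" "norm (x - y) \<ge> norm x + 1 - \<delta>"
  shows "norm ((1 / norm x) *\<^sub>R x - y) \<ge> 2 - \<delta> * (1 + 1 / norm x)"
proof -
  let ?u = "(1 / norm x) *\<^sub>R x"
  let ?t = "norm x"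
  have t0: "?t > 0" using assms by simp
  have xu: "x = ?t *\<^sub>R ?u" using t0 by simp
  show ?thesis
  proof (cases "?t \<ge> 1")
    case True
    have "norm (x - ?u) = ?t - 1"
    proof -
      have "((?t - 1) / ?t) *\<^sub>R x = x - ?u" using t0 by (simp add: diff_divide_distrib scaleR_diff_left)
      hence "norm (x - ?u) = \<bar>(?t - 1) / ?t\<bar> * ?t" by (metis norm_scaleR)
      thus ?thesis using True t0 by simp
    qed
    moreover have "norm (x - y) \<le> norm (x - ?u) + norm (?u - y)"
      by (metis diff_add_cancel add_diff_eq norm_triangle_ineq diff_diff_eq2)
    ultimately have "norm (?u - y) \<ge> 2 - \<delta>" using assms by linarith
    moreover have "\<delta> \<le> \<delta> * (1 + 1 / ?t)" using assms t0 by (simp add: algebra_simps)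
    ultimately show ?thesis by linarith
  next
    case False
    have "x - y = ?t *\<^sub>R (?u - y) - (1 - ?t) *\<^sub>R y" using t0 by (simp add: algebra_simps)
    hence "norm (x - y) \<le> norm (?t *\<^sub>R (?u - y)) + norm ((1 - ?t) *\<^sub>R y)"
      by (metis norm_triangle_ineq4)
    also have "\<dots> = ?t * norm (?u - y) + (1 - ?t)" using False assms t0 by simp
    finally have "?t * norm (?u - y) \<ge> 2 * ?t - \<delta>" using assms by linarith
    hence "norm (?u - y) \<ge> 2 - \<delta> / ?t" using t0 by (simp add: field_simps)
    moreover have "\<delta> / ?t \<le> \<delta> * (1 + 1 / ?t)" using assms t0 by (simp add: algebra_simps)
    ultimately show ?thesis by linarith
  qed
qed


lemma l0: "(\<lambda>n. 1 / real (Suc n)) \<longlonglongrightarrow> 0"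
  using LIMSEQ_inverse_real_of_nat by (simp add: inverse_eq_divide)

lemma limc: "(\<lambda>n. a - c * (1 / real (Suc n))) \<longlonglongrightarrow> (a::real)"
  using tendsto_diff[OF tendsto_const tendsto_mult[OF tendsto_const l0], of a c] by simp

definition Dc :: "'a::real_normed_vector \<Rightarrow> bool" where
  "Dc x \<longleftrightarrow> (\<forall>\<epsilon>>0. \<exists>\<delta>>0. \<forall>y\<in>Qd (sphere 0 1) x \<delta>. norm (y + (1 / norm x) *\<^sub>R x) \<le> \<epsilon>)"

lemma D_ev:
  fixes x :: "'a::real_normed_vector"
  assumes "Dc x" "\<epsilon> > 0"
  shows "\<forall>\<^sub>F n in sequentially. \<forall>y\<in>Qd (sphere 0 1) x (1 / real (Suc n)). norm (y + (1 / norm x) *\<^sub>R x) \<le> \<epsilon>"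
proof -
  obtain \<delta> where d: "\<delta> > 0" "\<forall>y\<in>Qd (sphere 0 1) x \<delta>. norm (y + (1 / norm x) *\<^sub>R x) \<le> \<epsilon>"
    using assms unfolding Dc_def by blast
  obtain N where N: "inverse (real (Suc N)) < \<delta>" using reals_Archimedean[OF d(1)] by blast
  show ?thesis unfolding eventually_sequentially
  proof (intro exI allI impI ballI)
    fix n y assume n: "N \<le> n" and y: "y \<in> Qd (sphere 0 1) x (1 / real (Suc n))"
    have "1 / real (Suc n) \<le> 1 / real (Suc N)" using n by (simp add: frac_le)
    hence "1 / real (Suc n) \<le> \<delta>" using N by (simp add: inverse_eq_divide)
    hence "y \<in> Qd (sphere 0 1) x \<delta>" using y Qd_mono by blast
    thus "norm (y + (1 / norm x) *\<^sub>R x) \<le> \<epsilon>" using d by blast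
  qed
qed

lemma D_of_ev:
  fixes x :: "'a::real_normed_vector"
  assumes "\<And>\<epsilon>. \<epsilon> > 0 \<Longrightarrow> \<forall>\<^sub>F n in sequentially. \<forall>y\<in>Qd (sphere 0 1) x (1 / real (Suc n)). norm (y + (1 / norm x) *\<^sub>R x) \<le> \<epsilon>"
  shows "Dc x"
  unfolding Dc_def
proof (intro allI impI)
  fix \<epsilon> :: real assume "\<epsilon> > 0"
  from assms[OF this] obtain N where "\<forall>n\<ge>N. \<forall>y\<in>Qd (sphere 0 1) x (1 / real (Suc n)). norm (y + (1 / norm x) *\<^sub>R x) \<le> \<epsilon>"
    unfolding eventually_sequentially by blast
  hence "\<forall>y\<in>Qd (sphere 0 1) x (1 / real (Suc N)). norm (y + (1 / norm x) *\<^sub>R x) \<le> \<epsilon>" by blast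
  thus "\<exists>\<delta>>0. \<forall>y\<in>Qd (sphere 0 1) x \<delta>. norm (y + (1 / norm x) *\<^sub>R x) \<le> \<epsilon>"
    by (intro exI[of _ "1 / real (Suc N)"]) simp
qed

lemma notD:
  fixes x :: "'a::real_normed_vector"
  assumes "\<not> Dc x"
  obtains \<epsilon> y where "\<epsilon> > 0" "\<And>n. y n \<in> Qd (sphere 0 1) x (1 / real (Suc n))"
     "\<And>n. norm (y n + (1 / norm x) *\<^sub>R x) > \<epsilon>"
proof -
  from assms obtain \<epsilon> where e: "\<epsilon> > 0" and h: "\<forall>\<delta>>0. \<exists>y\<in>Qd (sphere 0 1) x \<delta>. norm (y + (1 / norm x) *\<^sub>R x) > \<epsilon>"
    unfolding Dc_def by (auto simp: not_le)
  have "\<forall>n. \<exists>y. y \<in> Qd (sphere 0 1) x (1 / real (Suc n)) \<and> norm (y + (1 / norm x) *\<^sub>R x) > \<epsilon>"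
  proof
    fix n
    have p: "1 / real (Suc n) > 0" by simp
    show "\<exists>y. y \<in> Qd (sphere 0 1) x (1 / real (Suc n)) \<and> norm (y + (1 / norm x) *\<^sub>R x) > \<epsilon>"
      using h p by blast
  qed
  from choice[OF this] obtain y where "\<forall>n. y n \<in> Qd (sphere 0 1) x (1 / real (Suc n)) \<and> norm (y n + (1 / norm x) *\<^sub>R x) > \<epsilon>"
    by blast
  thus ?thesis using that e by blast
qed

lemma maxseq:
  fixes x :: "'a::real_normed_vector"
  assumes x0: "x \<noteq> 0" and y: "\<And>n. y n \<in> Qd (sphere 0 1) x (1 / real (Suc n))"
  shows "(\<lambda>n. norm (x - y n)) \<longlonglongrightarrow> norm x + 1"
proof (rule tendsto_sandwich[of "\<lambda>n. norm x + 1 - 1 * (1 / real (Suc n))" _ _ "\<lambda>n. norm x + 1"])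
  show "\<forall>\<^sub>F n in sequentially. norm x + 1 - 1 * (1 / real (Suc n)) \<le> norm (x - y n)"
    using y Qd_iff[OF x0] by simp
  show "\<forall>\<^sub>F n in sequentially. norm (x - y n) \<le> norm x + 1"
    using y Qd_iff[OF x0] upper_b by (simp add: upper_b)
  show "(\<lambda>n. norm x + 1 - 1 * (1 / real (Suc n))) \<longlonglongrightarrow> norm x + 1" by (rule limc)
qed simp

lemma L1: "LUR TYPE('a::real_normed_vector) \<longleftrightarrow> (\<forall>x::'a. x \<noteq> 0 \<longrightarrow> Dc x)"
proof
  assume lur: "LUR TYPE('a)"
  show "\<forall>x::'a. x \<noteq> 0 \<longrightarrow> Dc x"
  proof (intro allI impI, rule ccontr)
    fix x :: 'a assume x0: "x \<noteq> 0" and nd: "\<not> Dc x"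
    let ?u = "(1 / norm x) *\<^sub>R x"
    obtain \<epsilon> y where e: "\<epsilon> > 0" and yQ: "\<And>n. y n \<in> Qd (sphere 0 1) x (1 / real (Suc n))"
      and yb: "\<And>n. norm (y n + ?u) > \<epsilon>" using notD[OF nd] by blast
    define c where "c = (1 + 1 / norm x) / 2"
    have yn: "norm (y n) = 1" for n using yQ Qd_iff[OF x0] by blast
    have lb: "2 - (1 / real (Suc n)) * (1 + 1 / norm x) \<le> norm (?u - y n)" for n
      using key[OF x0 yn, of "1 / real (Suc n)"] yQ[of n] Qd_iff[OF x0] by auto
    have ub: "norm (?u - y n) \<le> 2" for n using yn[of n] norm_triangle_ineq4[of ?u "y n"] x0 by simp
    have eqn: "norm ((1/2) *\<^sub>R (- y n + ?u)) = norm (?u - y n) / 2" for n by simp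
    have "(\<lambda>n. norm ((1/2) *\<^sub>R (- y n + ?u))) \<longlonglongrightarrow> 1"
    proof (rule tendsto_sandwich[of "\<lambda>n. 1 - c * (1 / real (Suc n))" _ _ "\<lambda>n. 1"])
      show "\<forall>\<^sub>F n in sequentially. 1 - c * (1 / real (Suc n)) \<le> norm ((1/2) *\<^sub>R (- y n + ?u))"
      proof (intro always_eventually allI)
        fix n
        have "1 - c * (1 / real (Suc n)) = (2 - (1 / real (Suc n)) * (1 + 1 / norm x)) / 2"
          unfolding c_def by (simp add: field_simps)
        also have "\<dots> \<le> norm (?u - y n) / 2"
          by (rule divide_right_mono[OF lb[of n]]) simp
        finally show "1 - c * (1 / real (Suc n)) \<le> norm ((1/2) *\<^sub>R (- y n + ?u))"
          unfolding eqn .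
      qed
      show "\<forall>\<^sub>F n in sequentially. norm ((1/2) *\<^sub>R (- y n + ?u)) \<le> 1"
        using ub unfolding eqn by auto
      show "(\<lambda>n. 1 - c * (1 / real (Suc n))) \<longlonglongrightarrow> 1" by (rule limc)
    qed simp
    moreover have "norm ?u = 1" using x0 by simp
    ultimately have lim: "(\<lambda>n. - y n) \<longlonglongrightarrow> ?u" using lur yn unfolding LUR_def by simp
    have "\<forall>\<^sub>F n in sequentially. dist (- y n) ?u < \<epsilon>" using lim e by (rule tendstoD)
    then obtain N where "\<forall>n\<ge>N. dist (- y n) ?u < \<epsilon>" unfolding eventually_sequentially by blast
    hence "dist (- y N) ?u < \<epsilon>" by blast
    moreover have "dist (- y N) ?u = norm (y N + ?u)"
    proof -
      have "- y N - ?u = - (y N + ?u)" by simp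
      thus ?thesis by (simp only: dist_norm norm_minus_cancel)
    qed
    ultimately show False using yb[of N] by simp
  qed
next
  assume D: "\<forall>x::'a. x \<noteq> 0 \<longrightarrow> Dc x"
  show "LUR TYPE('a)" unfolding LUR_def
  proof (intro allI impI)
    fix x :: 'a and xs
    assume a: "norm x = 1 \<and> (\<forall>n. norm (xs n) = 1) \<and> (\<lambda>n. norm ((1/2) *\<^sub>R (xs n + x))) \<longlonglongrightarrow> 1"
    have x0: "x \<noteq> 0" using a by auto
    have ux: "(1 / norm x) *\<^sub>R x = x" using a by simp
    show "xs \<longlonglongrightarrow> x" unfolding tendsto_iff
    proof (intro allI impI)
      fix r :: real assume r: "r > 0"
      have "Dc x" using D x0 by blast
      moreover have r2: "r / 2 > 0" using r by simp
      ultimately have "\<exists>\<delta>>0. \<forall>y\<in>Qd (sphere 0 1) x \<delta>. norm (y + (1 / norm x) *\<^sub>R x) \<le> r / 2"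
        unfolding Dc_def by blast
      then obtain \<delta> where d: "\<delta> > 0" "\<forall>y\<in>Qd (sphere 0 1) x \<delta>. norm (y + x) \<le> r / 2"
        unfolding ux by blast
      have lim: "(\<lambda>n. norm ((1/2) *\<^sub>R (xs n + x))) \<longlonglongrightarrow> 1" using a by blast
      have "1 - \<delta> / 2 < 1" using d(1) by simp
      from order_tendstoD(1)[OF lim this]
      have "\<forall>\<^sub>F n in sequentially. norm ((1/2) *\<^sub>R (xs n + x)) > 1 - \<delta> / 2" .
      thus "\<forall>\<^sub>F n in sequentially. dist (xs n) x < r"
      proof eventually_elim
        case (elim n)
        have "norm ((1/2) *\<^sub>R (xs n + x)) = norm (xs n + x) / 2" by simp
        hence "norm (x - (- xs n)) > norm x + 1 - \<delta>" using elim a by (simp add: add.commute)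
        hence "- xs n \<in> Qd (sphere 0 1) x \<delta>" using Qd_iff[OF x0] a by auto
        hence "norm (- xs n + x) \<le> r / 2" using d by blast
        moreover have "dist (xs n) x = norm (- xs n + x)"
        proof -
          have "- xs n + x = - (xs n - x)" by simp
          thus ?thesis by (simp only: dist_norm norm_minus_cancel)
        qed
        ultimately show ?case using r by simp
      qed
    qed
  qed
qed


lemma nd1:
  fixes u y :: "'a::real_normed_vector"
  shows "dist (- u) y = norm (y + u)"
proof -
  have "- u - y = - (y + u)" by simp
  thus ?thesis by (simp only: dist_norm norm_minus_cancel)
qed

lemma nd2:
  fixes u y :: "'a::real_normed_vector"
  shows "dist y (- u) = norm (y + u)"
  by (simp add: dist_norm)

lemma Q0_single:
  fixes x :: "'a::real_normed_vector"
  assumes x0: "x \<noteq> 0" and D: "Dc x"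
  shows "Q0 (sphere 0 1) x = {- ((1 / norm x) *\<^sub>R x)}"
proof
  let ?u = "(1 / norm x) *\<^sub>R x"
  show "{- ?u} \<subseteq> Q0 (sphere 0 1) x" using negu_in[OF x0, of 0] unfolding Q0_def by simp
  show "Q0 (sphere 0 1) x \<subseteq> {- ?u}"
  proof
    fix y assume y: "y \<in> Q0 (sphere 0 1) x"
    have h: "norm (y + ?u) \<le> \<epsilon>" if e: "\<epsilon> > 0" for \<epsilon>
    proof -
      obtain \<delta> where d: "\<delta> > 0" "\<forall>y\<in>Qd (sphere 0 1) x \<delta>. norm (y + ?u) \<le> \<epsilon>"
        using D e unfolding Dc_def by blast
      have "y \<in> Qd (sphere 0 1) x \<delta>" using y Qd_mono[of 0 \<delta>] d(1) unfolding Q0_def by auto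
      thus ?thesis using d by blast
    qed
    have "\<not> norm (y + ?u) > 0"
    proof
      assume p: "norm (y + ?u) > 0"
      hence "norm (y + ?u) \<le> norm (y + ?u) / 2" using h[of "norm (y + ?u) / 2"] by simp
      with p show False by simp
    qed
    hence "y + ?u = 0" by simp
    hence "y = - ?u" by (simp add: eq_neg_iff_add_eq_0)
    thus "y \<in> {- ?u}" by simp
  qed
qed

lemma bddQ:
  fixes x :: "'a::real_normed_vector"
  shows "bounded (Qd (sphere 0 1) x \<delta>)"
proof (rule bounded_subset[OF bounded_cball[of "0::'a" 1]])
  show "Qd (sphere 0 1) x \<delta> \<subseteq> cball 0 1" using Qd_sub[of "sphere 0 1" x \<delta>] sphere_cball by blast
qed

lemma L3: "(\<forall>x::'a::real_normed_vector. x \<noteq> 0 \<longrightarrow> ((\<lambda>n. diameter (Qd (sphere 0 1) x (1 / real (Suc n)))) \<longlonglongrightarrow> 0))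
   \<longleftrightarrow> (\<forall>x::'a. x \<noteq> 0 \<longrightarrow> Dc x)"
proof
  assume H: "\<forall>x::'a. x \<noteq> 0 \<longrightarrow> ((\<lambda>n. diameter (Qd (sphere 0 1) x (1 / real (Suc n)))) \<longlonglongrightarrow> 0)"
  show "\<forall>x::'a. x \<noteq> 0 \<longrightarrow> Dc x"
  proof (intro allI impI)
    fix x :: 'a assume x0: "x \<noteq> 0"
    let ?u = "(1 / norm x) *\<^sub>R x"
    have lim: "(\<lambda>n. diameter (Qd (sphere 0 1) x (1 / real (Suc n)))) \<longlonglongrightarrow> 0" using H x0 by blast
    show "Dc x"
    proof (rule D_of_ev)
      fix \<epsilon> :: real assume e: "\<epsilon> > 0"
      show "\<forall>\<^sub>F n in sequentially. \<forall>y\<in>Qd (sphere 0 1) x (1 / real (Suc n)). norm (y + ?u) \<le> \<epsilon>"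
        using tendstoD[OF lim e]
      proof eventually_elim
        case (elim n)
        show ?case
        proof
          fix y assume y: "y \<in> Qd (sphere 0 1) x (1 / real (Suc n))"
          have "-?u \<in> Qd (sphere 0 1) x (1 / real (Suc n))" by (rule negu_in[OF x0]) simp
          hence "dist y (-?u) \<le> diameter (Qd (sphere 0 1) x (1 / real (Suc n)))"
            using y bddQ diameter_bounded_bound by blast
          thus "norm (y + ?u) \<le> \<epsilon>" using elim unfolding nd2 by simp
        qed
      qed
    qed
  qed
next
  assume D: "\<forall>x::'a. x \<noteq> 0 \<longrightarrow> Dc x"
  show "\<forall>x::'a. x \<noteq> 0 \<longrightarrow> ((\<lambda>n. diameter (Qd (sphere 0 1) x (1 / real (Suc n)))) \<longlonglongrightarrow> 0)"
  proof (intro allI impI)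
    fix x :: 'a assume x0: "x \<noteq> 0"
    let ?u = "(1 / norm x) *\<^sub>R x"
    show "(\<lambda>n. diameter (Qd (sphere 0 1) x (1 / real (Suc n)))) \<longlonglongrightarrow> 0"
      unfolding tendsto_iff
    proof (intro allI impI)
      fix \<epsilon> :: real assume e: "\<epsilon> > 0"
      have "\<epsilon> / 4 > 0" using e by simp
      hence ev: "\<forall>\<^sub>F n in sequentially. \<forall>y\<in>Qd (sphere 0 1) x (1 / real (Suc n)). norm (y + ?u) \<le> \<epsilon> / 4"
        using D_ev[of x] D x0 by blast
      from ev show "\<forall>\<^sub>F n in sequentially. dist (diameter (Qd (sphere 0 1) x (1 / real (Suc n)))) 0 < \<epsilon>"
      proof eventually_elim
        case (elim n)
        let ?Q = "Qd (sphere 0 1) x (1 / real (Suc n))"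
        have "diameter ?Q \<le> \<epsilon> / 2"
        proof (rule diameter_le)
          show "?Q \<noteq> {} \<or> 0 \<le> \<epsilon> / 2" using e by simp
          fix a b assume a: "a \<in> ?Q" and b: "b \<in> ?Q"
          have "a - b = (a + ?u) - (b + ?u)" by simp
          hence "norm (a - b) \<le> norm (a + ?u) + norm (b + ?u)" by (metis norm_triangle_ineq4)
          moreover have "norm (a + ?u) \<le> \<epsilon> / 4" "norm (b + ?u) \<le> \<epsilon> / 4" using elim a b by auto
          ultimately show "norm (a - b) \<le> \<epsilon> / 2" by linarith
        qed
        moreover have "0 \<le> diameter ?Q" by (rule diameter_ge_0[OF bddQ])
        ultimately show ?case using e by simp
      qed
    qed
  qed
qed

lemma sr_upper:
  fixes A B :: "'a::real_normed_vector set"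
  assumes "A \<subseteq> sphere 0 1" "B \<subseteq> sphere 0 1" "a \<in> A" "b \<in> B"
  shows "norm (a - b) \<le> set_rad A B"
proof -
  have bdd: "bdd_above ((\<lambda>p. norm (fst p - snd p)) ` (A \<times> B))"
  proof (rule bdd_aboveI2[where M=2])
    fix p assume "p \<in> A \<times> B"
    hence "norm (fst p) = 1" "norm (snd p) = 1" using assms by auto
    thus "norm (fst p - snd p) \<le> 2" using norm_triangle_ineq4[of "fst p" "snd p"] by simp
  qed
  have "(a, b) \<in> A \<times> B" using assms by simp
  from cSUP_upper[OF this bdd] show ?thesis unfolding set_rad_def by simp
qed

lemma sr_least:
  fixes A B :: "'a::real_normed_vector set"
  assumes "a \<in> A" "b \<in> B" "\<And>a b. a \<in> A \<Longrightarrow> b \<in> B \<Longrightarrow> norm (a - b) \<le> M"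
  shows "set_rad A B \<le> M"
  unfolding set_rad_def
proof (rule cSUP_least)
  show "A \<times> B \<noteq> {}" using assms by blast
  fix p assume "p \<in> A \<times> B"
  thus "norm (fst p - snd p) \<le> M" using assms(3) by (cases p) auto
qed

lemma L2: "(\<forall>x x'::'a::real_normed_vector. x \<noteq> 0 \<and> x' \<noteq> 0 \<longrightarrow>
              ((\<lambda>n. set_rad (Qd (sphere 0 1) x (1 / real (Suc n))) (Qd (sphere 0 1) x' (1 / real (Suc n))))
                 \<longlonglongrightarrow> norm ((1 / norm x) *\<^sub>R x - (1 / norm x') *\<^sub>R x')))
   \<longleftrightarrow> (\<forall>x::'a. x \<noteq> 0 \<longrightarrow> Dc x)"
proof
  assume H: "\<forall>x x'::'a. x \<noteq> 0 \<and> x' \<noteq> 0 \<longrightarrow>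
              ((\<lambda>n. set_rad (Qd (sphere 0 1) x (1 / real (Suc n))) (Qd (sphere 0 1) x' (1 / real (Suc n))))
                 \<longlonglongrightarrow> norm ((1 / norm x) *\<^sub>R x - (1 / norm x') *\<^sub>R x'))"
  show "\<forall>x::'a. x \<noteq> 0 \<longrightarrow> Dc x"
  proof (intro allI impI)
    fix x :: 'a assume x0: "x \<noteq> 0"
    let ?u = "(1 / norm x) *\<^sub>R x"
    have lim: "(\<lambda>n. set_rad (Qd (sphere 0 1) x (1 / real (Suc n))) (Qd (sphere 0 1) x (1 / real (Suc n)))) \<longlonglongrightarrow> 0"
      using H x0 by force
    show "Dc x"
    proof (rule D_of_ev)
      fix \<epsilon> :: real assume e: "\<epsilon> > 0"
      show "\<forall>\<^sub>F n in sequentially. \<forall>y\<in>Qd (sphere 0 1) x (1 / real (Suc n)). norm (y + ?u) \<le> \<epsilon>"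
        using tendstoD[OF lim e]
      proof eventually_elim
        case (elim n)
        show ?case
        proof
          fix y assume y: "y \<in> Qd (sphere 0 1) x (1 / real (Suc n))"
          have "-?u \<in> Qd (sphere 0 1) x (1 / real (Suc n))" by (rule negu_in[OF x0]) simp
          hence "norm (y - (-?u)) \<le> set_rad (Qd (sphere 0 1) x (1 / real (Suc n))) (Qd (sphere 0 1) x (1 / real (Suc n)))"
            using y Qd_sub by (intro sr_upper) auto
          thus "norm (y + ?u) \<le> \<epsilon>" using elim by simp
        qed
      qed
    qed
  qed
next
  assume D: "\<forall>x::'a. x \<noteq> 0 \<longrightarrow> Dc x"
  show "\<forall>x x'::'a. x \<noteq> 0 \<and> x' \<noteq> 0 \<longrightarrow>
              ((\<lambda>n. set_rad (Qd (sphere 0 1) x (1 / real (Suc n))) (Qd (sphere 0 1) x' (1 / real (Suc n))))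
                 \<longlonglongrightarrow> norm ((1 / norm x) *\<^sub>R x - (1 / norm x') *\<^sub>R x'))"
  proof (intro allI impI)
    fix x x' :: 'a assume xx: "x \<noteq> 0 \<and> x' \<noteq> 0"
    hence x0: "x \<noteq> 0" and x0': "x' \<noteq> 0" by auto
    let ?u = "(1 / norm x) *\<^sub>R x"
    let ?u' = "(1 / norm x') *\<^sub>R x'"
    show "(\<lambda>n. set_rad (Qd (sphere 0 1) x (1 / real (Suc n))) (Qd (sphere 0 1) x' (1 / real (Suc n))))
                 \<longlonglongrightarrow> norm (?u - ?u')"
      unfolding tendsto_iff
    proof (intro allI impI)
      fix \<epsilon> :: real assume e: "\<epsilon> > 0"
      have e4: "\<epsilon> / 4 > 0" using e by simp
      have ev1: "\<forall>\<^sub>F n in sequentially. \<forall>y\<in>Qd (sphere 0 1) x (1 / real (Suc n)). norm (y + ?u) \<le> \<epsilon> / 4"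
        using D_ev[OF _ e4, of x] D x0 by blast
      have ev2: "\<forall>\<^sub>F n in sequentially. \<forall>y\<in>Qd (sphere 0 1) x' (1 / real (Suc n)). norm (y + ?u') \<le> \<epsilon> / 4"
        using D_ev[OF _ e4, of x'] D x0' by blast
      from ev1 ev2
      show "\<forall>\<^sub>F n in sequentially. dist (set_rad (Qd (sphere 0 1) x (1 / real (Suc n))) (Qd (sphere 0 1) x' (1 / real (Suc n)))) (norm (?u - ?u')) < \<epsilon>"
      proof eventually_elim
        case (elim n)
        let ?A = "Qd (sphere 0 1) x (1 / real (Suc n))"
        let ?B = "Qd (sphere 0 1) x' (1 / real (Suc n))"
        have a0: "-?u \<in> ?A" by (rule negu_in[OF x0]) simp
        have b0: "-?u' \<in> ?B" by (rule negu_in[OF x0']) simp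
        have "norm (-?u - - ?u') \<le> set_rad ?A ?B"
          using a0 b0 Qd_sub by (intro sr_upper) auto
        moreover have "norm (-?u - - ?u') = norm (?u - ?u')"
          by (metis minus_diff_eq minus_diff_minus norm_minus_commute)
        ultimately have lo: "norm (?u - ?u') \<le> set_rad ?A ?B" by simp
        have hi: "set_rad ?A ?B \<le> norm (?u - ?u') + \<epsilon> / 2"
        proof (rule sr_least[OF a0 b0])
          fix a b assume a: "a \<in> ?A" and b: "b \<in> ?B"
          have "a - b = ((a + ?u) - (b + ?u')) - (?u - ?u')" by (simp add: algebra_simps)
          hence "norm (a - b) \<le> norm ((a + ?u) - (b + ?u')) + norm (?u - ?u')"
            by (metis norm_triangle_ineq4)
          moreover have "norm ((a + ?u) - (b + ?u')) \<le> norm (a + ?u) + norm (b + ?u')"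
            by (rule norm_triangle_ineq4)
          moreover have "norm (a + ?u) \<le> \<epsilon> / 4" "norm (b + ?u') \<le> \<epsilon> / 4" using elim a b by auto
          ultimately show "norm (a - b) \<le> norm (?u - ?u') + \<epsilon> / 2" by linarith
        qed
        show ?case using lo hi e unfolding dist_real_def by simp
      qed
    qed
  qed
qed


lemma L4: "(\<forall>x::'a::real_normed_vector. x \<noteq> 0 \<longrightarrow> (\<forall>y. maximizing_seq (sphere 0 1) x y \<longrightarrow> y \<longlonglongrightarrow> - ((1 / norm x) *\<^sub>R x)))
   \<longleftrightarrow> (\<forall>x::'a. x \<noteq> 0 \<longrightarrow> Dc x)"
proof
  assume H: "\<forall>x::'a. x \<noteq> 0 \<longrightarrow> (\<forall>y. maximizing_seq (sphere 0 1) x y \<longrightarrow> y \<longlonglongrightarrow> - ((1 / norm x) *\<^sub>R x))"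
  show "\<forall>x::'a. x \<noteq> 0 \<longrightarrow> Dc x"
  proof (intro allI impI, rule ccontr)
    fix x :: 'a assume x0: "x \<noteq> 0" and nd: "\<not> Dc x"
    let ?u = "(1 / norm x) *\<^sub>R x"
    obtain \<epsilon> y where e: "\<epsilon> > 0" and yQ: "\<And>n. y n \<in> Qd (sphere 0 1) x (1 / real (Suc n))"
      and yb: "\<And>n. norm (y n + ?u) > \<epsilon>" using notD[OF nd] by blast
    have "maximizing_seq (sphere 0 1) x y"
      unfolding maximizing_seq_def far_rad[OF x0]
      using yQ Qd_sub maxseq[OF x0 yQ] by blast
    hence lim: "y \<longlonglongrightarrow> - ?u" using H x0 by blast
    have "\<forall>\<^sub>F n in sequentially. dist (y n) (- ?u) < \<epsilon>" using lim e by (rule tendstoD)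
    then obtain N where "\<forall>n\<ge>N. dist (y n) (- ?u) < \<epsilon>" unfolding eventually_sequentially by blast
    hence "dist (y N) (- ?u) < \<epsilon>" by blast
    thus False using yb[of N] unfolding nd2 by simp
  qed
next
  assume D: "\<forall>x::'a. x \<noteq> 0 \<longrightarrow> Dc x"
  show "\<forall>x::'a. x \<noteq> 0 \<longrightarrow> (\<forall>y. maximizing_seq (sphere 0 1) x y \<longrightarrow> y \<longlonglongrightarrow> - ((1 / norm x) *\<^sub>R x))"
  proof (intro allI impI)
    fix x :: 'a and y assume x0: "x \<noteq> 0" and ms: "maximizing_seq (sphere 0 1) x y"
    let ?u = "(1 / norm x) *\<^sub>R x"
    have ys: "\<And>n. norm (y n) = 1" using ms unfolding maximizing_seq_def by simp
    have lim: "(\<lambda>n. norm (x - y n)) \<longlonglongrightarrow> norm x + 1"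
      using ms unfolding maximizing_seq_def far_rad[OF x0] by blast
    show "y \<longlonglongrightarrow> - ?u" unfolding tendsto_iff
    proof (intro allI impI)
      fix r :: real assume r: "r > 0"
      have "Dc x" using D x0 by blast
      moreover have r2: "r / 2 > 0" using r by simp
      ultimately obtain \<delta> where d: "\<delta> > 0" "\<forall>y\<in>Qd (sphere 0 1) x \<delta>. norm (y + ?u) \<le> r / 2"
        unfolding Dc_def by blast
      have "norm x + 1 - \<delta> < norm x + 1" using d(1) by simp
      from order_tendstoD(1)[OF lim this]
      show "\<forall>\<^sub>F n in sequentially. dist (y n) (- ?u) < r"
      proof eventually_elim
        case (elim n)
        hence "y n \<in> Qd (sphere 0 1) x \<delta>" using Qd_iff[OF x0] ys by auto
        hence "norm (y n + ?u) \<le> r / 2" using d by blast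
        thus ?case using r unfolding nd2 by simp
      qed
    qed
  qed
qed

lemma enlarge_single:
  fixes a y :: "'a::real_normed_vector"
  shows "y \<in> enlarge {a} \<epsilon> \<longleftrightarrow> norm (y - a) \<le> \<epsilon>"
proof
  assume "y \<in> enlarge {a} \<epsilon>"
  then obtain b where "y = a + b" "norm b \<le> \<epsilon>" unfolding enlarge_def by blast
  thus "norm (y - a) \<le> \<epsilon>" by simp
next
  assume h: "norm (y - a) \<le> \<epsilon>"
  have "y = a + (y - a)" by simp
  thus "y \<in> enlarge {a} \<epsilon>" unfolding enlarge_def using h by blast
qed

lemma mem_enlarge:
  fixes a :: "'a::real_normed_vector"
  assumes "a \<in> A" "0 \<le> \<epsilon>"
  shows "a \<in> enlarge A \<epsilon>"
proof -
  have "a = a + 0" by simp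
  thus ?thesis unfolding enlarge_def using assms by force
qed

lemma L5: "(\<forall>x::'a::real_normed_vector. x \<noteq> 0 \<longrightarrow> Q0 (sphere 0 1) x = {- ((1 / norm x) *\<^sub>R x)} \<and>
              vietoris_conv (\<lambda>n. Qd (sphere 0 1) x (1 / real (Suc n))) (Q0 (sphere 0 1) x))
   \<longleftrightarrow> (\<forall>x::'a. x \<noteq> 0 \<longrightarrow> Dc x)"
proof
  assume H: "\<forall>x::'a. x \<noteq> 0 \<longrightarrow> Q0 (sphere 0 1) x = {- ((1 / norm x) *\<^sub>R x)} \<and>
              vietoris_conv (\<lambda>n. Qd (sphere 0 1) x (1 / real (Suc n))) (Q0 (sphere 0 1) x)"
  show "\<forall>x::'a. x \<noteq> 0 \<longrightarrow> Dc x"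
  proof (intro allI impI)
    fix x :: 'a assume x0: "x \<noteq> 0"
    let ?u = "(1 / norm x) *\<^sub>R x"
    have Q: "Q0 (sphere 0 1) x = {- ?u}" and V: "vietoris_conv (\<lambda>n. Qd (sphere 0 1) x (1 / real (Suc n))) {- ?u}"
      using H x0 by auto
    show "Dc x"
    proof (rule D_of_ev)
      fix \<epsilon> :: real assume e: "\<epsilon> > 0"
      have "open (ball (- ?u) \<epsilon>)" "{- ?u} \<subseteq> ball (- ?u) \<epsilon>" using e by auto
      hence "\<forall>\<^sub>F n in sequentially. Qd (sphere 0 1) x (1 / real (Suc n)) \<subseteq> ball (- ?u) \<epsilon>"
        using V unfolding vietoris_conv_def by blast
      thus "\<forall>\<^sub>F n in sequentially. \<forall>y\<in>Qd (sphere 0 1) x (1 / real (Suc n)). norm (y + ?u) \<le> \<epsilon>"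
      proof eventually_elim
        case (elim n)
        show ?case
        proof
          fix y assume "y \<in> Qd (sphere 0 1) x (1 / real (Suc n))"
          hence "y \<in> ball (- ?u) \<epsilon>" using elim by blast
          thus "norm (y + ?u) \<le> \<epsilon>" unfolding mem_ball nd1 by simp
        qed
      qed
    qed
  qed
next
  assume D: "\<forall>x::'a. x \<noteq> 0 \<longrightarrow> Dc x"
  show "\<forall>x::'a. x \<noteq> 0 \<longrightarrow> Q0 (sphere 0 1) x = {- ((1 / norm x) *\<^sub>R x)} \<and>
              vietoris_conv (\<lambda>n. Qd (sphere 0 1) x (1 / real (Suc n))) (Q0 (sphere 0 1) x)"
  proof (intro allI impI conjI)
    fix x :: 'a assume x0: "x \<noteq> 0"
    let ?u = "(1 / norm x) *\<^sub>R x"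
    have Dx: "Dc x" using D x0 by blast
    show Q: "Q0 (sphere 0 1) x = {- ?u}" by (rule Q0_single[OF x0 Dx])
    have inQ: "- ?u \<in> Qd (sphere 0 1) x (1 / real (Suc n))" for n by (rule negu_in[OF x0]) simp
    show "vietoris_conv (\<lambda>n. Qd (sphere 0 1) x (1 / real (Suc n))) (Q0 (sphere 0 1) x)"
      unfolding vietoris_conv_def Q
    proof (intro conjI allI impI)
      fix U :: "'a set" assume U: "open U \<and> {- ?u} \<subseteq> U"
      then obtain e where e: "e > 0" "ball (- ?u) e \<subseteq> U" using open_contains_ball by blast
      have "e / 2 > 0" using e by simp
      from D_ev[OF Dx this]
      show "\<forall>\<^sub>F n in sequentially. Qd (sphere 0 1) x (1 / real (Suc n)) \<subseteq> U"
      proof eventually_elim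
        case (elim n)
        show ?case
        proof
          fix y assume "y \<in> Qd (sphere 0 1) x (1 / real (Suc n))"
          hence "norm (y + ?u) \<le> e / 2" using elim by blast
          hence "y \<in> ball (- ?u) e" unfolding mem_ball nd1 using e by simp
          thus "y \<in> U" using e by blast
        qed
      qed
    next
      fix U :: "'a set" assume U: "open U \<and> {- ?u} \<inter> U \<noteq> {}"
      hence "- ?u \<in> U" by blast
      hence "\<And>n. Qd (sphere 0 1) x (1 / real (Suc n)) \<inter> U \<noteq> {}" using inQ by blast
      thus "\<forall>\<^sub>F n in sequentially. Qd (sphere 0 1) x (1 / real (Suc n)) \<inter> U \<noteq> {}"
        by (simp add: always_eventually)
    qed
  qed
qed

lemma L6: "(\<forall>x::'a::real_normed_vector. x \<noteq> 0 \<longrightarrow> Q0 (sphere 0 1) x = {- ((1 / norm x) *\<^sub>R x)} \<and>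
              hausdorff_conv (\<lambda>n. Qd (sphere 0 1) x (1 / real (Suc n))) (Q0 (sphere 0 1) x))
   \<longleftrightarrow> (\<forall>x::'a. x \<noteq> 0 \<longrightarrow> Dc x)"
proof
  assume H: "\<forall>x::'a. x \<noteq> 0 \<longrightarrow> Q0 (sphere 0 1) x = {- ((1 / norm x) *\<^sub>R x)} \<and>
              hausdorff_conv (\<lambda>n. Qd (sphere 0 1) x (1 / real (Suc n))) (Q0 (sphere 0 1) x)"
  show "\<forall>x::'a. x \<noteq> 0 \<longrightarrow> Dc x"
  proof (intro allI impI)
    fix x :: 'a assume x0: "x \<noteq> 0"
    let ?u = "(1 / norm x) *\<^sub>R x"
    have Q: "Q0 (sphere 0 1) x = {- ?u}" and V: "hausdorff_conv (\<lambda>n. Qd (sphere 0 1) x (1 / real (Suc n))) {- ?u}"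
      using H x0 by auto
    show "Dc x"
    proof (rule D_of_ev)
      fix \<epsilon> :: real assume e: "\<epsilon> > 0"
      from V e have "\<forall>\<^sub>F n in sequentially. Qd (sphere 0 1) x (1 / real (Suc n)) \<subseteq> enlarge {- ?u} \<epsilon>
          \<and> {- ?u} \<subseteq> enlarge (Qd (sphere 0 1) x (1 / real (Suc n))) \<epsilon>"
        unfolding hausdorff_conv_def by blast
      thus "\<forall>\<^sub>F n in sequentially. \<forall>y\<in>Qd (sphere 0 1) x (1 / real (Suc n)). norm (y + ?u) \<le> \<epsilon>"
      proof eventually_elim
        case (elim n)
        show ?case
        proof
          fix y assume "y \<in> Qd (sphere 0 1) x (1 / real (Suc n))"
          hence "y \<in> enlarge {- ?u} \<epsilon>" using elim by blast
          thus "norm (y + ?u) \<le> \<epsilon>" unfolding enlarge_single by simp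
        qed
      qed
    qed
  qed
next
  assume D: "\<forall>x::'a. x \<noteq> 0 \<longrightarrow> Dc x"
  show "\<forall>x::'a. x \<noteq> 0 \<longrightarrow> Q0 (sphere 0 1) x = {- ((1 / norm x) *\<^sub>R x)} \<and>
              hausdorff_conv (\<lambda>n. Qd (sphere 0 1) x (1 / real (Suc n))) (Q0 (sphere 0 1) x)"
  proof (intro allI impI conjI)
    fix x :: 'a assume x0: "x \<noteq> 0"
    let ?u = "(1 / norm x) *\<^sub>R x"
    have Dx: "Dc x" using D x0 by blast
    show Q: "Q0 (sphere 0 1) x = {- ?u}" by (rule Q0_single[OF x0 Dx])
    have inQ: "- ?u \<in> Qd (sphere 0 1) x (1 / real (Suc n))" for n by (rule negu_in[OF x0]) simp
    show "hausdorff_conv (\<lambda>n. Qd (sphere 0 1) x (1 / real (Suc n))) (Q0 (sphere 0 1) x)"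
      unfolding hausdorff_conv_def Q
    proof (intro allI impI)
      fix \<epsilon> :: real assume e: "\<epsilon> > 0"
      from D_ev[OF Dx e]
      show "\<forall>\<^sub>F n in sequentially. Qd (sphere 0 1) x (1 / real (Suc n)) \<subseteq> enlarge {- ?u} \<epsilon>
          \<and> {- ?u} \<subseteq> enlarge (Qd (sphere 0 1) x (1 / real (Suc n))) \<epsilon>"
      proof eventually_elim
        case (elim n)
        have "Qd (sphere 0 1) x (1 / real (Suc n)) \<subseteq> enlarge {- ?u} \<epsilon>"
        proof
          fix y assume "y \<in> Qd (sphere 0 1) x (1 / real (Suc n))"
          hence "norm (y + ?u) \<le> \<epsilon>" using elim by blast
          thus "y \<in> enlarge {- ?u} \<epsilon>" unfolding enlarge_single by simp
        qed
        moreover have "- ?u \<in> enlarge (Qd (sphere 0 1) x (1 / real (Suc n))) \<epsilon>"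
          using mem_enlarge[OF inQ[of n]] e by simp
        ultimately show ?case by blast
      qed
    qed
  qed
qed

lemma L7: "SUR (sphere 0 1) (- {0::'a::real_normed_vector}) \<longleftrightarrow> (\<forall>x::'a. x \<noteq> 0 \<longrightarrow> Dc x)"
proof
  assume H: "SUR (sphere 0 1) (- {0::'a})"
  show "\<forall>x::'a. x \<noteq> 0 \<longrightarrow> Dc x"
  proof (intro allI impI)
    fix x :: 'a assume x0: "x \<noteq> 0"
    let ?u = "(1 / norm x) *\<^sub>R x"
    have xin: "x \<in> - {0}" using x0 by simp
    obtain z where z: "Q0 (sphere 0 1) x = {z}" using H xin unfolding SUR_def by blast
    have "- ?u \<in> Q0 (sphere 0 1) x" using negu_in[OF x0, of 0] unfolding Q0_def by simp
    hence Q: "Q0 (sphere 0 1) x = {- ?u}" using z by simp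
    have E: "\<forall>\<epsilon>>0. \<exists>\<delta>>0. Qd (sphere 0 1) x \<delta> \<subseteq> enlarge (Q0 (sphere 0 1) x) \<epsilon>"
      using H xin unfolding SUR_def by blast
    show "Dc x" unfolding Dc_def
    proof (intro allI impI)
      fix \<epsilon> :: real assume e: "\<epsilon> > 0"
      then obtain \<delta> where d: "\<delta> > 0" "Qd (sphere 0 1) x \<delta> \<subseteq> enlarge {- ?u} \<epsilon>" using E Q by auto
      have "\<forall>y\<in>Qd (sphere 0 1) x \<delta>. norm (y + ?u) \<le> \<epsilon>"
      proof
        fix y assume "y \<in> Qd (sphere 0 1) x \<delta>"
        hence "y \<in> enlarge {- ?u} \<epsilon>" using d by blast
        thus "norm (y + ?u) \<le> \<epsilon>" unfolding enlarge_single by simp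
      qed
      thus "\<exists>\<delta>>0. \<forall>y\<in>Qd (sphere 0 1) x \<delta>. norm (y + ?u) \<le> \<epsilon>" using d(1) by blast
    qed
  qed
next
  assume D: "\<forall>x::'a. x \<noteq> 0 \<longrightarrow> Dc x"
  show "SUR (sphere 0 1) (- {0::'a})" unfolding SUR_def
  proof (intro ballI conjI allI impI)
    fix x :: 'a assume "x \<in> - {0}"
    hence x0: "x \<noteq> 0" by simp
    let ?u = "(1 / norm x) *\<^sub>R x"
    have Dx: "Dc x" using D x0 by blast
    have Q: "Q0 (sphere 0 1) x = {- ?u}" by (rule Q0_single[OF x0 Dx])
    thus "\<exists>z. Q0 (sphere 0 1) x = {z}" by blast
    fix \<epsilon> :: real assume e: "\<epsilon> > 0"
    then obtain \<delta> where d: "\<delta> > 0" "\<forall>y\<in>Qd (sphere 0 1) x \<delta>. norm (y + ?u) \<le> \<epsilon>"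
      using Dx unfolding Dc_def by blast
    have "Qd (sphere 0 1) x \<delta> \<subseteq> enlarge (Q0 (sphere 0 1) x) \<epsilon>"
      unfolding Q
    proof
      fix y assume "y \<in> Qd (sphere 0 1) x \<delta>"
      hence "norm (y + ?u) \<le> \<epsilon>" using d by blast
      thus "y \<in> enlarge {- ?u} \<epsilon>" unfolding enlarge_single by simp
    qed
    thus "\<exists>\<delta>>0. Qd (sphere 0 1) x \<delta> \<subseteq> enlarge (Q0 (sphere 0 1) x) \<epsilon>" using d(1) by blast
  qed
qed

theorem theorem3p7:
  shows
  "let S = (unit_sphere :: 'a::banach set);
       c1 = LUR TYPE('a);
       c2 = (\<forall>x x'. x \<noteq> 0 \<and> x' \<noteq> 0 \<longrightarrow>
              ((\<lambda>n. set_rad (Qd S x (1 / real (Suc n))) (Qd S x' (1 / real (Suc n))))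
                 \<longlonglongrightarrow> norm ((1 / norm x) *\<^sub>R x - (1 / norm x') *\<^sub>R x')));
       c3 = (\<forall>x. x \<noteq> 0 \<longrightarrow> ((\<lambda>n. diameter (Qd S x (1 / real (Suc n)))) \<longlonglongrightarrow> 0));
       c4 = (\<forall>x. x \<noteq> 0 \<longrightarrow> (\<forall>y. maximizing_seq S x y \<longrightarrow> y \<longlonglongrightarrow> - ((1 / norm x) *\<^sub>R x)));
       c5 = (\<forall>x. x \<noteq> 0 \<longrightarrow> Q0 S x = {- ((1 / norm x) *\<^sub>R x)} \<and>
              vietoris_conv (\<lambda>n. Qd S x (1 / real (Suc n))) (Q0 S x));
       c6 = (\<forall>x. x \<noteq> 0 \<longrightarrow> Q0 S x = {- ((1 / norm x) *\<^sub>R x)} \<and>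
              hausdorff_conv (\<lambda>n. Qd S x (1 / real (Suc n))) (Q0 S x));
       c7 = SUR S (- {0})
   in (c1 \<longleftrightarrow> c2) \<and> (c1 \<longleftrightarrow> c3) \<and> (c1 \<longleftrightarrow> c4) \<and> (c1 \<longleftrightarrow> c5) \<and>
      (c1 \<longleftrightarrow> c6) \<and> (c1 \<longleftrightarrow> c7)"
  unfolding Let_def unit_sphere_def
  by (simp only: L1 L2 L3 L4 L5 L6 L7)

end
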